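(* Let $\mathscr G=(\mathscr V,\mathscr E)$ be a finite connected graph with $N$ vertices and $M\ge0$ an integer. The uniform saving model $(Z_t)$ on $\mathscr C_{N,M}$ has a unique stationary distribution $\pi_Z$, and $$\lim_{t\to\infty}P_\eta(Z_t=\xi)=\pi_Z(\xi)\quad\text{for all }\xi,\eta\in\mathscr C_{N,M},$$ where $P_\eta$ denotes the law of the process started from $Z_0=\eta$.
   Context: $\mathscr C_{N,M}$ is the set of maps $\xi:\mathscr V\to\mathbb N$ with $\sum_x\xi(x)=M$. The uniform saving model is the discrete-time Markov chain on $\mathscr C_{N,M}$: at each step an edge $(x,y)\in\mathscr E$ is chosen uniformly at random; independent $U_1$ uniform on $\{0,\dots,Z_t(x)\}$ and $U_2$ uniform on $\{0,\dots,Z_t(y)\}$ are drawn; given $U_1=c_x,U_2=c_y$, $U$ is drawn uniformly from $\{0,\dots,Z_t(x)+Z_t(y)-c_x-c_y\}$; then $Z_{t+1}(x)=c_x+U$, $Z_{t+1}(y)=Z_t(x)+Z_t(y)-c_x-U$, $Z_{t+1}(z)=Z_t(z)$ for $z\notin\{x,y\}$. *)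

theory Defs
  imports "HOL-Probability.Probability_Mass_Function"
begin

definition configs :: "'a set \<Rightarrow> nat \<Rightarrow> ('a \<Rightarrow> nat) set" where
  "configs V M = {\<xi>. (\<forall>z. z \<notin> V \<longrightarrow> \<xi> z = 0) \<and> (\<Sum>x\<in>V. \<xi> x) = M}"

definition finite_connected_graph :: "'a set \<Rightarrow> ('a \<times> 'a) set \<Rightarrow> bool" where
  "finite_connected_graph V E \<longleftrightarrow> finite V \<and> V \<noteq> {} \<and> E \<subseteq> V \<times> V \<and>
     (\<forall>x. (x, x) \<notin> E) \<and> (\<forall>x\<in>V. \<forall>y\<in>V. (x, y) \<in> (E \<union> E\<inverse>)\<^sup>*)"

definition usm_step :: "('a \<times> 'a) set \<Rightarrow> ('a \<Rightarrow> nat) \<Rightarrow> ('a \<Rightarrow> nat) pmf" where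
  "usm_step E \<xi> =
     (if E = {} then return_pmf \<xi> else
      bind_pmf (pmf_of_set E) (\<lambda>(x, y).
      bind_pmf (pmf_of_set {0..\<xi> x}) (\<lambda>cx.
      bind_pmf (pmf_of_set {0..\<xi> y}) (\<lambda>cy.
      bind_pmf (pmf_of_set {0..\<xi> x + \<xi> y - cx - cy}) (\<lambda>u.
      return_pmf (\<xi>(x := cx + u, y := \<xi> x + \<xi> y - cx - u)))))))"

definition usm_law :: "('a \<times> 'a) set \<Rightarrow> ('a \<Rightarrow> nat) \<Rightarrow> nat \<Rightarrow> ('a \<Rightarrow> nat) pmf" where
  "usm_law E \<eta> t = ((\<lambda>p. bind_pmf p (usm_step E)) ^^ t) (return_pmf \<eta>)"

definition usm_stationary :: "'a set \<Rightarrow> ('a \<times> 'a) set \<Rightarrow> nat \<Rightarrow> ('a \<Rightarrow> nat) pmf \<Rightarrow> bool" where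
  "usm_stationary V E M \<pi> \<longleftrightarrow> set_pmf \<pi> \<subseteq> configs V M \<and> bind_pmf \<pi> (usm_step E) = \<pi>"

end

theory Submission
  imports Defs
begin


definition lawK :: "('b \<Rightarrow> 'b pmf) \<Rightarrow> 'b \<Rightarrow> nat \<Rightarrow> 'b pmf" where
  "lawK K x t = ((\<lambda>p. bind_pmf p K) ^^ t) (return_pmf x)"

lemma lawK_0[simp]: "lawK K x 0 = return_pmf x" by (simp add: lawK_def)
lemma lawK_Suc: "lawK K x (Suc t) = bind_pmf (lawK K x t) K" by (simp add: lawK_def)

lemma lawK_add: "lawK K x (k + t) = bind_pmf (lawK K x k) (\<lambda>z. lawK K z t)"
proof (induction t)
  case 0 then show ?case by (simp add: bind_return_pmf')
next
  case (Suc t) then show ?case by (simp add: lawK_Suc bind_assoc_pmf)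
qed

lemma lawK_supp:
  assumes "\<forall>x\<in>S. set_pmf (K x) \<subseteq> S" "x \<in> S"
  shows "set_pmf (lawK K x t) \<subseteq> S"
  using assms by (induction t) (auto simp: lawK_Suc)

lemma pmf_bind_sum:
  assumes "finite S" "set_pmf p \<subseteq> S"
  shows "pmf (bind_pmf p f) y = (\<Sum>z\<in>S. pmf p z * pmf (f z) y)"
  unfolding pmf_bind using assms
  by (subst integral_measure_pmf_real[of S]) (auto simp: mult.commute)

lemma avg_bounds:
  fixes g :: "'b \<Rightarrow> real"
  assumes "finite S" "set_pmf p \<subseteq> S" "S \<noteq> {}"
  shows "Min (g ` S) \<le> (\<Sum>z\<in>S. pmf p z * g z)" "(\<Sum>z\<in>S. pmf p z * g z) \<le> Max (g ` S)"
proof -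
  have "(\<Sum>z\<in>S. pmf p z * Min (g ` S)) \<le> (\<Sum>z\<in>S. pmf p z * g z)"
    by (rule sum_mono) (simp add: assms mult_left_mono)
  then show "Min (g ` S) \<le> (\<Sum>z\<in>S. pmf p z * g z)"
    using sum_pmf_eq_1[OF assms(1,2)] by (simp add: sum_distrib_right[symmetric])
  have "(\<Sum>z\<in>S. pmf p z * g z) \<le> (\<Sum>z\<in>S. pmf p z * Max (g ` S))"
    by (rule sum_mono) (simp add: assms mult_left_mono)
  then show "(\<Sum>z\<in>S. pmf p z * g z) \<le> Max (g ` S)"
    using sum_pmf_eq_1[OF assms(1,2)] by (simp add: sum_distrib_right[symmetric])
qed

locale doeb =
  fixes S :: "'b set" and K :: "'b \<Rightarrow> 'b pmf" and k :: nat and s :: 'b and \<delta> :: real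
  assumes fin: "finite S" and ne: "S \<noteq> {}" and closed: "\<forall>x\<in>S. set_pmf (K x) \<subseteq> S"
    and kpos: "k > 0" and sS: "s \<in> S" and dpos: "\<delta> > 0"
    and dl: "\<forall>x\<in>S. \<delta> \<le> pmf (lawK K x k) s"
begin

definition "g \<xi> t x = pmf (lawK K x t) \<xi>"
definition "Mx \<xi> t = Max (g \<xi> t ` S)"
definition "mn \<xi> t = Min (g \<xi> t ` S)"

lemma supp: "x \<in> S \<Longrightarrow> set_pmf (lawK K x t) \<subseteq> S"
  by (rule lawK_supp[OF closed])

lemma g_add: "x \<in> S \<Longrightarrow> g \<xi> (j + t) x = (\<Sum>z\<in>S. pmf (lawK K x j) z * g \<xi> t z)"
proof -
  assume x: "x \<in> S"
  have "g \<xi> (j + t) x = pmf (bind_pmf (lawK K x j) (\<lambda>z. lawK K z t)) \<xi>"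
    by (simp only: g_def lawK_add)
  also have "\<dots> = (\<Sum>z\<in>S. pmf (lawK K x j) z * pmf (lawK K z t) \<xi>)"
    by (rule pmf_bind_sum[OF fin supp[OF x]])
  finally show ?thesis by (simp only: g_def)
qed

lemma g_le_Mx: "x \<in> S \<Longrightarrow> g \<xi> t x \<le> Mx \<xi> t"
  unfolding Mx_def using fin by auto
lemma g_ge_mn: "x \<in> S \<Longrightarrow> mn \<xi> t \<le> g \<xi> t x"
  unfolding mn_def using fin by auto

lemma Mx_ex: "\<exists>x\<in>S. Mx \<xi> t = g \<xi> t x"
proof -
  have "Max (g \<xi> t ` S) \<in> g \<xi> t ` S" using fin ne by (intro Max_in) auto
  then show ?thesis unfolding Mx_def by auto
qed
lemma mn_ex: "\<exists>x\<in>S. mn \<xi> t = g \<xi> t x"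
proof -
  have "Min (g \<xi> t ` S) \<in> g \<xi> t ` S" using fin ne by (intro Min_in) auto
  then show ?thesis unfolding mn_def by auto
qed

lemma Mx_mono: "Mx \<xi> (j + t) \<le> Mx \<xi> t"
proof -
  obtain x where x: "x \<in> S" "Mx \<xi> (j+t) = g \<xi> (j+t) x" using Mx_ex by blast
  have "Mx \<xi> (j+t) = (\<Sum>z\<in>S. pmf (lawK K x j) z * g \<xi> t z)"
    using x(2) g_add[OF x(1), of \<xi> j t] by (rule trans)
  also have "\<dots> \<le> Max (g \<xi> t ` S)"
    by (rule avg_bounds(2)[OF fin supp[OF x(1), of j] ne])
  finally show ?thesis unfolding Mx_def[of \<xi> t] .
qed

lemma mn_mono: "mn \<xi> t \<le> mn \<xi> (j + t)"
proof -
  obtain x where x: "x \<in> S" "mn \<xi> (j+t) = g \<xi> (j+t) x" using mn_ex by blast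
  have "mn \<xi> (j+t) = (\<Sum>z\<in>S. pmf (lawK K x j) z * g \<xi> t z)"
    using x(2) g_add[OF x(1), of \<xi> j t] by (rule trans)
  moreover have "Min (g \<xi> t ` S) \<le> (\<Sum>z\<in>S. pmf (lawK K x j) z * g \<xi> t z)"
    by (rule avg_bounds(1)[OF fin supp[OF x(1), of j] ne])
  ultimately show ?thesis unfolding mn_def[of \<xi> t] by simp
qed

lemma mn_le_Mx: "mn \<xi> t \<le> Mx \<xi> t"
  using g_le_Mx[OF sS, of \<xi> t] g_ge_mn[OF sS, of \<xi> t] by linarith

lemma upper: assumes x: "x \<in> S"
  shows "g \<xi> (k + t) x \<le> Mx \<xi> t - \<delta> * (Mx \<xi> t - g \<xi> t s)"
proof -
  let ?p = "\<lambda>z. pmf (lawK K x k) z"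
  have "?p s * (Mx \<xi> t - g \<xi> t s) \<le> (\<Sum>z\<in>S. ?p z * (Mx \<xi> t - g \<xi> t z))"
    by (rule member_le_sum[OF sS]) (auto simp: g_le_Mx fin)
  also have "\<dots> = Mx \<xi> t - g \<xi> (k + t) x"
    using g_add[OF x, of \<xi> k t] sum_pmf_eq_1[OF fin supp[OF x]]
    by (simp add: right_diff_distrib sum_subtractf sum_distrib_right[symmetric])
  finally have "?p s * (Mx \<xi> t - g \<xi> t s) \<le> Mx \<xi> t - g \<xi> (k + t) x" .
  moreover have "\<delta> * (Mx \<xi> t - g \<xi> t s) \<le> ?p s * (Mx \<xi> t - g \<xi> t s)"
    using dl x g_le_Mx[OF sS] by (intro mult_right_mono) auto
  ultimately show ?thesis by linarith
qed

lemma lower: assumes x: "x \<in> S"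
  shows "mn \<xi> t + \<delta> * (g \<xi> t s - mn \<xi> t) \<le> g \<xi> (k + t) x"
proof -
  let ?p = "\<lambda>z. pmf (lawK K x k) z"
  have "?p s * (g \<xi> t s - mn \<xi> t) \<le> (\<Sum>z\<in>S. ?p z * (g \<xi> t z - mn \<xi> t))"
    by (rule member_le_sum[OF sS]) (auto simp: g_ge_mn fin)
  also have "\<dots> = g \<xi> (k + t) x - mn \<xi> t"
    using g_add[OF x, of \<xi> k t] sum_pmf_eq_1[OF fin supp[OF x]]
    by (simp add: right_diff_distrib sum_subtractf sum_distrib_right[symmetric])
  finally have "?p s * (g \<xi> t s - mn \<xi> t) \<le> g \<xi> (k + t) x - mn \<xi> t" .
  moreover have "\<delta> * (g \<xi> t s - mn \<xi> t) \<le> ?p s * (g \<xi> t s - mn \<xi> t)"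
    using dl x g_ge_mn[OF sS] by (intro mult_right_mono) auto
  ultimately show ?thesis by linarith
qed

lemma contr: "Mx \<xi> (k + t) - mn \<xi> (k + t) \<le> (1 - \<delta>) * (Mx \<xi> t - mn \<xi> t)"
proof -
  obtain x where x: "x \<in> S" "Mx \<xi> (k+t) = g \<xi> (k+t) x" using Mx_ex by blast
  obtain y where y: "y \<in> S" "mn \<xi> (k+t) = g \<xi> (k+t) y" using mn_ex by blast
  show ?thesis using upper[OF x(1), of \<xi> t] lower[OF y(1), of \<xi> t] x y
    by (simp add: algebra_simps)
qed

definition "osc \<xi> t = Mx \<xi> t - mn \<xi> t"

lemma osc_nonneg: "0 \<le> osc \<xi> t"
  using mn_le_Mx[of \<xi> t] unfolding osc_def by linarith

lemma osc_mono: "osc \<xi> (j + t) \<le> osc \<xi> t"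
  using Mx_mono[of \<xi> j t] mn_mono[of \<xi> t j] unfolding osc_def by linarith

lemma osc_mono': "t \<le> t' \<Longrightarrow> osc \<xi> t' \<le> osc \<xi> t"
  using osc_mono[of \<xi> "t' - t" t] by simp

lemma d_le1: "\<delta> \<le> 1"
  using dl sS pmf_le_1[of "lawK K s k" s] by force

lemma osc_pow: "osc \<xi> (n * k) \<le> (1 - \<delta>) ^ n * osc \<xi> 0"
proof (induction n)
  case 0 then show ?case by simp
next
  case (Suc n)
  have "osc \<xi> (Suc n * k) = osc \<xi> (k + n * k)" by simp
  also have "\<dots> \<le> (1 - \<delta>) * osc \<xi> (n * k)"
    using contr[of \<xi> "n * k"] unfolding osc_def .
  also have "\<dots> \<le> (1 - \<delta>) * ((1 - \<delta>) ^ n * osc \<xi> 0)"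
    using Suc d_le1 by (intro mult_left_mono) auto
  finally show ?case by simp
qed

lemma osc_lim: "(\<lambda>t. osc \<xi> t) \<longlonglongrightarrow> 0"
proof (unfold lim_sequentially, intro allI impI)
  fix r :: real assume r: "r > 0"
  have "(\<lambda>n. (1 - \<delta>) ^ n * osc \<xi> 0) \<longlonglongrightarrow> 0 * osc \<xi> 0"
    using dpos d_le1 by (intro tendsto_mult LIMSEQ_power_zero tendsto_const) auto
  then obtain n where n: "\<forall>m\<ge>n. dist ((1 - \<delta>) ^ m * osc \<xi> 0) 0 < r"
    using r unfolding lim_sequentially by auto
  have "\<forall>t\<ge>n * k. dist (osc \<xi> t) 0 < r"
  proof (intro allI impI)
    fix t assume "n * k \<le> t"
    then have "osc \<xi> t \<le> osc \<xi> (n * k)" by (rule osc_mono')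
    also have "\<dots> \<le> (1 - \<delta>) ^ n * osc \<xi> 0" by (rule osc_pow)
    also have "\<dots> < r" using n by (auto simp: dist_real_def)
    finally show "dist (osc \<xi> t) 0 < r" using osc_nonneg[of \<xi> t] by (simp add: dist_real_def)
  qed
  then show "\<exists>no. \<forall>t\<ge>no. dist (osc \<xi> t) 0 < r" by blast
qed

lemma conv: "\<exists>L. \<forall>x\<in>S. (\<lambda>t. g \<xi> t x) \<longlonglongrightarrow> L"
proof -
  have dec: "decseq (Mx \<xi>)"
    unfolding decseq_Suc_iff using Mx_mono[of \<xi> 1] by simp
  have bnd: "\<forall>i. mn \<xi> 0 \<le> Mx \<xi> i"
    using mn_mono[of \<xi> 0] mn_le_Mx[of \<xi>] by (metis add.right_neutral order_trans)
  obtain L where L: "Mx \<xi> \<longlonglongrightarrow> L" using decseq_convergent[OF dec bnd] by blast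
  have "(\<lambda>t. g \<xi> t x) \<longlonglongrightarrow> L" if x: "x \<in> S" for x
  proof -
    have "(\<lambda>t. Mx \<xi> t - g \<xi> t x) \<longlonglongrightarrow> 0"
    proof (rule tendsto_sandwich[of "\<lambda>_. 0" _ _ "osc \<xi>"])
      show "\<forall>\<^sub>F t in sequentially. 0 \<le> Mx \<xi> t - g \<xi> t x"
        using g_le_Mx[OF x] by simp
      show "\<forall>\<^sub>F t in sequentially. Mx \<xi> t - g \<xi> t x \<le> osc \<xi> t"
        using g_ge_mn[OF x] by (simp add: osc_def)
    qed (auto simp: osc_lim)
    from tendsto_diff[OF L this] show ?thesis by simp
  qed
  then show ?thesis by blast
qed

lemma stat_iter:
  assumes "set_pmf \<pi> \<subseteq> S" "bind_pmf \<pi> K = \<pi>"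
  shows "bind_pmf \<pi> (\<lambda>z. lawK K z t) = \<pi>"
proof (induction t)
  case 0 then show ?case by (simp add: bind_return_pmf')
next
  case (Suc t)
  have "bind_pmf \<pi> (\<lambda>z. lawK K z (Suc t)) = bind_pmf (bind_pmf \<pi> (\<lambda>z. lawK K z t)) K"
    by (simp add: lawK_Suc bind_assoc_pmf)
  then show ?case using Suc assms(2) by simp
qed

lemma main:
  "(\<exists>!\<pi>. set_pmf \<pi> \<subseteq> S \<and> bind_pmf \<pi> K = \<pi>) \<and>
   (\<forall>\<pi>. set_pmf \<pi> \<subseteq> S \<and> bind_pmf \<pi> K = \<pi> \<longrightarrow>
      (\<forall>\<xi>\<in>S. \<forall>\<eta>\<in>S. (\<lambda>t. pmf (lawK K \<eta> t) \<xi>) \<longlonglongrightarrow> pmf \<pi> \<xi>))"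
proof -
  from conv have "\<forall>\<xi>. \<exists>L. \<forall>x\<in>S. (\<lambda>t. g \<xi> t x) \<longlonglongrightarrow> L" by blast
  then obtain L where L: "\<And>\<xi> x. x \<in> S \<Longrightarrow> (\<lambda>t. g \<xi> t x) \<longlonglongrightarrow> L \<xi>" by metis
  obtain x0 where x0: "x0 \<in> S" using ne by blast
  have Lnn: "0 \<le> L \<xi>" for \<xi>
    by (rule LIMSEQ_le_const[OF L[OF x0]]) (auto simp: g_def)
  have "(\<lambda>t. \<Sum>\<xi>\<in>S. g \<xi> t x0) \<longlonglongrightarrow> (\<Sum>\<xi>\<in>S. L \<xi>)"
    by (intro tendsto_sum L[OF x0])
  moreover have "(\<lambda>t. \<Sum>\<xi>\<in>S. g \<xi> t x0) = (\<lambda>t. 1)"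
    using sum_pmf_eq_1[OF fin supp[OF x0]] by (simp add: g_def)
  ultimately have sumL: "(\<Sum>\<xi>\<in>S. L \<xi>) = 1"
    using LIMSEQ_unique tendsto_const by metis
  define f where "f \<xi> = (if \<xi> \<in> S then L \<xi> else 0)" for \<xi>
  have fnn: "\<And>x. 0 \<le> f x" using Lnn by (simp add: f_def)
  have fsum: "(\<Sum>x\<in>S. f x) = 1" using sumL by (simp add: f_def)
  have fprob: "(\<integral>\<^sup>+x. ennreal (f x) \<partial>count_space UNIV) = 1"
  proof -
    have "(\<integral>\<^sup>+x. ennreal (f x) \<partial>count_space UNIV) = (\<Sum>x\<in>S. ennreal (f x))"
      by (rule nn_integral_count_space'[OF fin]) (auto simp: f_def)
    also have "\<dots> = ennreal (\<Sum>x\<in>S. f x)" using fnn by (simp add: sum_ennreal)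
    finally show ?thesis using fsum by simp
  qed
  define \<pi> where "\<pi> = embed_pmf f"
  have pmf\<pi>: "pmf \<pi> x = f x" for x
    unfolding \<pi>_def using pmf_embed_pmf[OF fnn fprob] .
  have P: "pmf \<pi>' \<xi> = f \<xi>" if st: "set_pmf \<pi>' \<subseteq> S" "bind_pmf \<pi>' K = \<pi>'" for \<pi>' \<xi>
  proof (cases "\<xi> \<in> S")
    case False
    then show ?thesis using st(1) by (auto simp: f_def pmf_eq_0_set_pmf)
  next
    case True
    have eq: "pmf \<pi>' \<xi> = (\<Sum>z\<in>S. pmf \<pi>' z * g \<xi> t z)" for t
      using pmf_bind_sum[OF fin st(1), of "\<lambda>z. lawK K z t" \<xi>] stat_iter[OF st, of t]
      by (simp add: g_def)
    have "(\<lambda>t. \<Sum>z\<in>S. pmf \<pi>' z * g \<xi> t z) \<longlonglongrightarrow> (\<Sum>z\<in>S. pmf \<pi>' z * L \<xi>)"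
      by (intro tendsto_sum tendsto_mult tendsto_const L) auto
    moreover have "(\<Sum>z\<in>S. pmf \<pi>' z * L \<xi>) = L \<xi>"
      using sum_pmf_eq_1[OF fin st(1)] by (simp add: sum_distrib_right[symmetric])
    ultimately have "(\<lambda>t. pmf \<pi>' \<xi>) \<longlonglongrightarrow> L \<xi>" using eq by simp
    then have "pmf \<pi>' \<xi> = L \<xi>" using LIMSEQ_unique tendsto_const by metis
    then show ?thesis using True by (simp add: f_def)
  qed
  have \<pi>S: "set_pmf \<pi> \<subseteq> S"
  proof
    fix x assume "x \<in> set_pmf \<pi>"
    then have "pmf \<pi> x \<noteq> 0" by (simp add: set_pmf_iff)
    then show "x \<in> S" by (simp add: pmf\<pi> f_def split: if_splits)
  qed
  have \<pi>st: "bind_pmf \<pi> K = \<pi>"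
  proof (rule pmf_eqI)
    fix \<xi>
    have b: "pmf (bind_pmf \<pi> K) \<xi> = (\<Sum>z\<in>S. f z * pmf (K z) \<xi>)"
      using pmf_bind_sum[OF fin \<pi>S] by (simp add: pmf\<pi>)
    show "pmf (bind_pmf \<pi> K) \<xi> = pmf \<pi> \<xi>"
    proof (cases "\<xi> \<in> S")
      case False
      have "pmf (K z) \<xi> = 0" if "z \<in> S" for z
        using closed that False by (auto simp: pmf_eq_0_set_pmf)
      then show ?thesis using b False by (simp add: pmf\<pi> f_def)
    next
      case True
      have e: "g \<xi> (Suc t) x0 = (\<Sum>z\<in>S. g z t x0 * pmf (K z) \<xi>)" for t
        unfolding g_def lawK_Suc by (rule pmf_bind_sum[OF fin supp[OF x0]])
      have "(\<lambda>t. \<Sum>z\<in>S. g z t x0 * pmf (K z) \<xi>) \<longlonglongrightarrow> (\<Sum>z\<in>S. L z * pmf (K z) \<xi>)"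
        by (intro tendsto_sum tendsto_mult tendsto_const L[OF x0])
      moreover have "(\<lambda>t. g \<xi> (Suc t) x0) \<longlonglongrightarrow> L \<xi>"
        using L[OF x0] by (rule LIMSEQ_Suc)
      ultimately have "(\<Sum>z\<in>S. L z * pmf (K z) \<xi>) = L \<xi>"
        using e LIMSEQ_unique by (metis (no_types, lifting) ext)
      moreover have "(\<Sum>z\<in>S. f z * pmf (K z) \<xi>) = (\<Sum>z\<in>S. L z * pmf (K z) \<xi>)"
        by (rule sum.cong) (auto simp: f_def)
      ultimately show ?thesis using b True by (simp add: pmf\<pi> f_def)
    qed
  qed
  show ?thesis
  proof (intro conjI allI impI ballI)
    show "\<exists>!\<pi>. set_pmf \<pi> \<subseteq> S \<and> bind_pmf \<pi> K = \<pi>"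
    proof (rule ex1I[of _ \<pi>])
      show "set_pmf \<pi> \<subseteq> S \<and> bind_pmf \<pi> K = \<pi>" using \<pi>S \<pi>st by blast
      fix \<pi>' assume "set_pmf \<pi>' \<subseteq> S \<and> bind_pmf \<pi>' K = \<pi>'"
      then show "\<pi>' = \<pi>" by (intro pmf_eqI) (simp add: P pmf\<pi>)
    qed
  next
    fix \<pi>' \<xi> \<eta> assume st: "set_pmf \<pi>' \<subseteq> S \<and> bind_pmf \<pi>' K = \<pi>'" and "\<xi> \<in> S" "\<eta> \<in> S"
    then show "(\<lambda>t. pmf (lawK K \<eta> t) \<xi>) \<longlonglongrightarrow> pmf \<pi>' \<xi>"
      using L[of \<eta> \<xi>] P[of \<pi>' \<xi>] by (simp add: g_def f_def)
  qed
qed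

end


lemma step_mem:
  assumes "z \<in> set_pmf (usm_step E \<xi>)" "E \<noteq> {}" "finite E"
  shows "\<exists>x y cx cy u. (x,y)\<in>E \<and> cx \<le> \<xi> x \<and> cy \<le> \<xi> y \<and> u \<le> \<xi> x + \<xi> y - cx - cy \<and>
     z = \<xi>(x:=cx+u, y:=\<xi> x+\<xi> y-cx-u)"
  using assms by (auto simp: usm_step_def split: prod.splits)

lemma step_move:
  assumes "(x,y)\<in>E" "finite E" "a \<le> \<xi> x + \<xi> y"
  shows "\<xi>(x:=a, y:=\<xi> x+\<xi> y-a) \<in> set_pmf (usm_step E \<xi>)"
proof -
  have "E \<noteq> {}" using assms by auto
  then show ?thesis using assms
    apply (simp add: usm_step_def)
    apply (rule bexI[of _ "(x,y)"])
     apply simp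
     apply (rule bexI[of _ 0], simp)
      apply (rule bexI[of _ 0], simp)
       apply (rule bexI[of _ a])
        apply auto
    done
qed

lemma sum_two:
  assumes "finite V" "x \<in> V" "y \<in> V" "x \<noteq> y"
  shows "sum f V = f x + f y + sum f (V - {x,y})"
proof -
  have "sum f V = f x + sum f (V - {x})" using assms by (simp add: sum.remove)
  also have "sum f (V - {x}) = f y + sum f (V - {x} - {y})"
    using assms by (intro sum.remove) auto
  finally show ?thesis by (simp add: Diff_insert2[symmetric] add.assoc)
qed

locale usmG =
  fixes V :: "'a set" and E :: "('a \<times> 'a) set" and M :: nat
  assumes G: "finite_connected_graph V E"
begin

lemma finV: "finite V" and neV: "V \<noteq> {}" and EV: "E \<subseteq> V \<times> V"
  and noloop: "(x, x) \<notin> E" and conn: "x \<in> V \<Longrightarrow> y \<in> V \<Longrightarrow> (x, y) \<in> (E \<union> E\<inverse>)\<^sup>*"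
  using G unfolding finite_connected_graph_def by auto

lemma finE: "finite E"
  using finite_subset[OF EV] finV by auto

lemma fin_configs: "finite (configs V M)"
proof -
  have "configs V M \<subseteq> {f. \<forall>x. (x \<in> V \<longrightarrow> f x \<in> {0..M}) \<and> (x \<notin> V \<longrightarrow> f x = 0)}"
  proof
    fix f assume f: "f \<in> configs V M"
    have "f x \<le> M" if "x \<in> V" for x
      using f that member_le_sum[of x V f] finV by (auto simp: configs_def)
    then show "f \<in> {f. \<forall>x. (x \<in> V \<longrightarrow> f x \<in> {0..M}) \<and> (x \<notin> V \<longrightarrow> f x = 0)}"
      using f by (auto simp: configs_def)
  qed
  then show ?thesis using finite_set_of_finite_funs[OF finV, of "{0..M}" 0] finite_subset by blast
qed

lemma closed_configs:
  assumes "\<xi> \<in> configs V M"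
  shows "set_pmf (usm_step E \<xi>) \<subseteq> configs V M"
proof
  fix z assume z: "z \<in> set_pmf (usm_step E \<xi>)"
  show "z \<in> configs V M"
  proof (cases "E = {}")
    case True then show ?thesis using z assms by (simp add: usm_step_def)
  next
    case False
    then obtain x y cx cy u where h: "(x,y)\<in>E" "cx \<le> \<xi> x" "cy \<le> \<xi> y" "u \<le> \<xi> x + \<xi> y - cx - cy"
       "z = \<xi>(x:=cx+u, y:=\<xi> x+\<xi> y-cx-u)"
      using step_mem[OF z False finE] by blast
    have xy: "x \<in> V" "y \<in> V" "x \<noteq> y" using h(1) EV noloop by auto
    have le: "cx + u \<le> \<xi> x + \<xi> y" using h(2-4) by linarith
    have "sum z V = z x + z y + sum z (V - {x,y})" by (rule sum_two[OF finV xy])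
    also have "sum z (V - {x,y}) = sum \<xi> (V - {x,y})" using h(5) by (intro sum.cong) auto
    also have "z x + z y = \<xi> x + \<xi> y" using h(5) xy le by auto
    also have "\<xi> x + \<xi> y + sum \<xi> (V - {x,y}) = sum \<xi> V" by (rule sum_two[OF finV xy, symmetric])
    finally have "sum z V = M" using assms by (simp add: configs_def)
    moreover have "z w = 0" if "w \<notin> V" for w
      using that xy h(5) assms by (auto simp: configs_def)
    ultimately show ?thesis by (simp add: configs_def)
  qed
qed

lemma self_loop: "\<xi> \<in> set_pmf (usm_step E \<xi>)"
proof (cases "E = {}")
  case True then show ?thesis by (simp add: usm_step_def)
next
  case False
  then obtain x y where xy: "(x,y) \<in> E" by auto
  have "\<xi>(x:=\<xi> x, y:=\<xi> x+\<xi> y-\<xi> x) \<in> set_pmf (usm_step E \<xi>)"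
    by (rule step_move[OF xy finE]) simp
  then show ?thesis by simp
qed

definition "R \<xi> \<zeta> \<longleftrightarrow> \<zeta> \<in> set_pmf (usm_step E \<xi>)"

lemma move_all:
  assumes "(y, z) \<in> E \<union> E\<inverse>"
  shows "R \<xi> (\<xi>(y:=0, z:=\<xi> z + \<xi> y))"
proof -
  have yz: "y \<noteq> z" using assms noloop by auto
  show ?thesis
  proof (cases "(y,z) \<in> E")
    case True
    have "\<xi>(y:=0, z:=\<xi> y+\<xi> z-0) \<in> set_pmf (usm_step E \<xi>)"
      by (rule step_move[OF True finE]) simp
    then show ?thesis by (simp add: R_def add.commute)
  next
    case False
    then have zy: "(z,y) \<in> E" using assms by auto
    have "\<xi>(z:=\<xi> z+\<xi> y, y:=\<xi> z+\<xi> y-(\<xi> z+\<xi> y)) \<in> set_pmf (usm_step E \<xi>)"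
      by (rule step_move[OF zy finE]) simp
    then show ?thesis using yz by (simp add: R_def fun_upd_twist)
  qed
qed

lemma path_gain:
  assumes "(y, v0) \<in> (E \<union> E\<inverse>)\<^sup>*"
  shows "\<forall>\<xi>. \<xi> y > 0 \<longrightarrow> y \<noteq> v0 \<longrightarrow> (\<exists>\<zeta>. R\<^sup>*\<^sup>* \<xi> \<zeta> \<and> \<zeta> v0 > \<xi> v0)"
  using assms
proof (induction rule: converse_rtrancl_induct)
  case base then show ?case by simp
next
  case (step y z)
  show ?case
  proof (intro allI impI)
    fix \<xi> :: "'a \<Rightarrow> nat" assume pos: "\<xi> y > 0" and ne: "y \<noteq> v0"
    have yz: "y \<noteq> z" using step(1) noloop by auto
    define \<xi>' where "\<xi>' = \<xi>(y:=0, z:=\<xi> z + \<xi> y)"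
    have R1: "R \<xi> \<xi>'" unfolding \<xi>'_def by (rule move_all[OF step(1)])
    show "\<exists>\<zeta>. R\<^sup>*\<^sup>* \<xi> \<zeta> \<and> \<zeta> v0 > \<xi> v0"
    proof (cases "z = v0")
      case True
      then show ?thesis using R1 pos ne by (intro exI[of _ \<xi>']) (auto simp: \<xi>'_def)
    next
      case False
      have "\<xi>' z > 0" using pos yz by (simp add: \<xi>'_def)
      then obtain \<zeta> where \<zeta>: "R\<^sup>*\<^sup>* \<xi>' \<zeta>" "\<zeta> v0 > \<xi>' v0" using step(3) False by blast
      have "\<xi>' v0 = \<xi> v0" using False ne by (simp add: \<xi>'_def)
      then show ?thesis using \<zeta> R1 by (intro exI[of _ \<zeta>]) auto
    qed
  qed
qed

lemma R_closed: "R\<^sup>*\<^sup>* \<xi> \<zeta> \<Longrightarrow> \<xi> \<in> configs V M \<Longrightarrow> \<zeta> \<in> configs V M"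
  by (induction rule: rtranclp_induct) (use closed_configs R_def in auto)

lemma s0_in: "v0 \<in> V \<Longrightarrow> (\<lambda>v. if v = v0 then M else 0) \<in> configs V M"
  using finV by (auto simp: configs_def)

lemma reach:
  assumes v0: "v0 \<in> V"
  shows "\<eta> \<in> configs V M \<Longrightarrow> R\<^sup>*\<^sup>* \<eta> (\<lambda>v. if v = v0 then M else 0)"
proof (induction "M - \<eta> v0" arbitrary: \<eta> rule: less_induct)
  case less
  let ?s = "\<lambda>v. if v = v0 then M else 0"
  show ?case
  proof (cases "\<exists>y\<in>V. y \<noteq> v0 \<and> \<eta> y > 0")
    case False
    then have z: "\<forall>y\<in>V - {v0}. \<eta> y = 0" by auto
    have "sum \<eta> V = \<eta> v0 + sum \<eta> (V - {v0})" using finV v0 by (simp add: sum.remove)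
    also have "sum \<eta> (V - {v0}) = 0" using z by simp
    finally have "\<eta> v0 = M" using less.prems by (simp add: configs_def)
    have "\<eta> = ?s"
    proof (rule ext)
      fix v show "\<eta> v = ?s v"
        using less.prems z \<open>\<eta> v0 = M\<close> by (cases "v \<in> V") (auto simp: configs_def)
    qed
    then show ?thesis by simp
  next
    case True
    then obtain y where y: "y \<in> V" "y \<noteq> v0" "\<eta> y > 0" by blast
    obtain \<zeta> where \<zeta>: "R\<^sup>*\<^sup>* \<eta> \<zeta>" "\<zeta> v0 > \<eta> v0"
      using path_gain[OF conn[OF y(1) v0]] y by blast
    have \<zeta>S: "\<zeta> \<in> configs V M" using R_closed[OF \<zeta>(1) less.prems] .
    have "\<zeta> v0 \<le> M" using \<zeta>S member_le_sum[of v0 V \<zeta>] finV v0 by (auto simp: configs_def)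
    then have "M - \<zeta> v0 < M - \<eta> v0" using \<zeta>(2) by linarith
    then have "R\<^sup>*\<^sup>* \<zeta> ?s" using less.hyps \<zeta>S by blast
    then show ?thesis using \<zeta>(1) by simp
  qed
qed

lemma reach_law: "R\<^sup>*\<^sup>* \<eta> \<zeta> \<Longrightarrow> \<exists>t. \<zeta> \<in> set_pmf (lawK (usm_step E) \<eta> t)"
proof (induction rule: rtranclp_induct)
  case base then show ?case by (intro exI[of _ 0]) simp
next
  case (step a b)
  then obtain t where "a \<in> set_pmf (lawK (usm_step E) \<eta> t)" by blast
  then have "b \<in> set_pmf (lawK (usm_step E) \<eta> (Suc t))"
    using step(2) by (auto simp: lawK_Suc R_def)
  then show ?case by blast
qed

lemma law_mono: "\<zeta> \<in> set_pmf (lawK (usm_step E) \<eta> t) \<Longrightarrow> \<zeta> \<in> set_pmf (lawK (usm_step E) \<eta> (t + d))"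
proof (induction d)
  case 0 then show ?case by simp
next
  case (Suc d)
  then show ?case using self_loop[of \<zeta>] by (auto simp: lawK_Suc)
qed

lemma doeblin:
  "\<exists>k s \<delta>. doeb (configs V M) (usm_step E) k s \<delta>"
proof -
  obtain v0 where v0: "v0 \<in> V" using neV by blast
  let ?S = "configs V M" and ?s = "\<lambda>v. if v = v0 then M else 0"
  have "\<forall>\<eta>\<in>?S. \<exists>t. ?s \<in> set_pmf (lawK (usm_step E) \<eta> t)"
    using reach[OF v0] reach_law by blast
  then obtain T where T: "\<And>\<eta>. \<eta> \<in> ?S \<Longrightarrow> ?s \<in> set_pmf (lawK (usm_step E) \<eta> (T \<eta>))" by metis
  define k where "k = Suc (Max (T ` ?S))"
  have k: "?s \<in> set_pmf (lawK (usm_step E) \<eta> k)" if "\<eta> \<in> ?S" for \<eta>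
  proof -
    have "T \<eta> \<le> Max (T ` ?S)" using that fin_configs by auto
    then have "k = T \<eta> + (k - T \<eta>)" unfolding k_def by linarith
    then show ?thesis using law_mono[OF T[OF that], of "k - T \<eta>"] by simp
  qed
  have ne: "?S \<noteq> {}" using s0_in[OF v0] by blast
  define \<delta> where "\<delta> = Min ((\<lambda>\<eta>. pmf (lawK (usm_step E) \<eta> k) ?s) ` ?S)"
  have "\<delta> \<in> (\<lambda>\<eta>. pmf (lawK (usm_step E) \<eta> k) ?s) ` ?S"
    unfolding \<delta>_def using fin_configs ne by (intro Min_in) auto
  then have dpos: "\<delta> > 0" using k by (auto simp: pmf_positive)
  have dl: "\<forall>x\<in>?S. \<delta> \<le> pmf (lawK (usm_step E) x k) ?s"
    unfolding \<delta>_def using fin_configs by auto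
  have "doeb ?S (usm_step E) k ?s \<delta>"
    by unfold_locales (use fin_configs ne closed_configs s0_in[OF v0] dpos dl k_def in auto)
  then show ?thesis by blast
qed

end


theorem lemma5:
  fixes V :: "'a set" and E :: "('a \<times> 'a) set" and M :: nat
  assumes "finite_connected_graph V E"
  shows "(\<exists>!\<pi>. usm_stationary V E M \<pi>) \<and>
         (\<forall>\<pi>. usm_stationary V E M \<pi> \<longrightarrow>
            (\<forall>\<xi>\<in>configs V M. \<forall>\<eta>\<in>configs V M.
               (\<lambda>t. pmf (usm_law E \<eta> t) \<xi>) \<longlonglongrightarrow> pmf \<pi> \<xi>))"
proof -
  interpret usmG V E M using assms by unfold_locales
  obtain k s \<delta> where d: "doeb (configs V M) (usm_step E) k s \<delta>" using doeblin by blast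
  have eq1: "usm_law E = lawK (usm_step E)"
    by (intro ext) (simp add: usm_law_def lawK_def)
  have eq2: "usm_stationary V E M = (\<lambda>\<pi>. set_pmf \<pi> \<subseteq> configs V M \<and> bind_pmf \<pi> (usm_step E) = \<pi>)"
    by (intro ext) (simp add: usm_stationary_def)
  show ?thesis unfolding eq1 eq2 using doeb.main[OF d] .
qed

end
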